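(* Let $n, m \ge 1$. Let $F \in \mathbb{R}^{n\times n}$ (state transition matrix) and $H \in \mathbb{R}^{m\times n}$ (measurement matrix) be known, with $H$ of full row rank $m$, and let $Q \in \mathbb{R}^{n\times n}$ and $R \in \mathbb{R}^{m\times m}$ (process and measurement noise covariances) be known symmetric positive definite matrices. Let $\tilde{x}_{t-1} \in \mathbb{R}^n$ and a symmetric positive semidefinite $\tilde{P}_{t-1} \in \mathbb{R}^{n\times n}$ be the previous state estimate and covariance. Define the Kalman prediction $$\hat{x}_t = F\tilde{x}_{t-1}, \qquad \hat{P}_t = F\tilde{P}_{t-1}F^T + Q,$$ and, for an observed measurement $\hat{z}_t \in \mathbb{R}^m$, the Kalman update $$K_t = \hat{P}_t H^T (H\hat{P}_t H^T + R)^{-1}, \qquad \tilde{x}_t = \hat{x}_t + K_t(\hat{z}_t - H\hat{x}_t), \qquad \tilde{P}_t = (I - K_t H)\hat{P}_t .$$ Consider the a-priori distribution $\mathcal{N}(\hat{x}_t, \hat{P}_t)$ and the a-posteriori distribution $\mathcal{N}(\tilde{x}_t, \tilde{P}_t)$ on $\mathbb{R}^n$, and the function $$D(\hat{z}_t) = D_{KL}\big(\mathcal{N}(\hat{x}_t,\hat{P}_t)\,\|\,\mathcal{N}(\tilde{x}_t,\tilde{P}_t)\big).$$ Then minimizing the residual $\|\hat{z}_t - H\hat{x}_t\|_2$ over $\hat{z}_t \in \mathbb{R}^m$ is equivalent to minimizing $D(\hat{z}_t)$ over $\hat{z}_t \in \mathbb{R}^m$; that is, the set of minimizers of $\hat{z}_t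 \mapsto \|\hat{z}_t - H\hat{x}_t\|_2$ coincides with the set of minimizers of $\hat{z}_t \mapsto D(\hat{z}_t)$.
   Context: $D_{KL}(p\|q) = \mathbb{E}_{p}[\log p - \log q]$ denotes the Kullback–Leibler divergence; for Gaussians on $\mathbb{R}^n$, $D_{KL}(\mathcal{N}(\mu_0,\Sigma_0)\|\mathcal{N}(\mu_1,\Sigma_1)) = \tfrac12\big(\log\frac{\det\Sigma_1}{\det\Sigma_0} - n + \mathrm{tr}(\Sigma_1^{-1}\Sigma_0) + (\mu_1-\mu_0)^T\Sigma_1^{-1}(\mu_1-\mu_0)\big)$. The setting is the linear Kalman filter model $x_t = Fx_{t-1} + \omega$, $\omega \sim \mathcal{N}(0,Q)$, $z_t = Hx_t + \nu$, $\nu \sim \mathcal{N}(0,R)$. *)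

theory Defs
  imports "HOL-Analysis.Analysis"
begin

definition sym_pos_def_mat :: "real^'n^'n \<Rightarrow> bool" where
  "sym_pos_def_mat A \<longleftrightarrow> transpose A = A \<and> (\<forall>x. x \<noteq> 0 \<longrightarrow> x \<bullet> (A *v x) > 0)"

definition sym_pos_semidef_mat :: "real^'n^'n \<Rightarrow> bool" where
  "sym_pos_semidef_mat A \<longleftrightarrow> transpose A = A \<and> (\<forall>x. x \<bullet> (A *v x) \<ge> 0)"

definition gauss_KL :: "real^'n \<Rightarrow> real^'n^'n \<Rightarrow> real^'n \<Rightarrow> real^'n^'n \<Rightarrow> real" where
  "gauss_KL mu0 S0 mu1 S1 =
     (ln (det S1 / det S0) - real CARD('n) + trace (matrix_inv S1 ** S0)
      + (mu1 - mu0) \<bullet> (matrix_inv S1 *v (mu1 - mu0))) / 2"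

definition kf_pred_mean :: "real^'n^'n \<Rightarrow> real^'n \<Rightarrow> real^'n" where
  "kf_pred_mean F x = F *v x"

definition kf_pred_cov :: "real^'n^'n \<Rightarrow> real^'n^'n \<Rightarrow> real^'n^'n \<Rightarrow> real^'n^'n" where
  "kf_pred_cov F P Q = F ** P ** transpose F + Q"

definition kf_gain :: "real^'n^'n \<Rightarrow> real^'n^'m \<Rightarrow> real^'m^'m \<Rightarrow> real^'m^'n" where
  "kf_gain P H R = P ** transpose H ** matrix_inv (H ** P ** transpose H + R)"

definition kf_upd_mean :: "real^'n \<Rightarrow> real^'n^'n \<Rightarrow> real^'n^'m \<Rightarrow> real^'m^'m \<Rightarrow> real^'m \<Rightarrow> real^'n" where
  "kf_upd_mean xh P H R z = xh + kf_gain P H R *v (z - H *v xh)"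

definition kf_upd_cov :: "real^'n^'n \<Rightarrow> real^'n^'m \<Rightarrow> real^'m^'m \<Rightarrow> real^'n^'n" where
  "kf_upd_cov P H R = (mat 1 - kf_gain P H R ** H) ** P"

definition minimizers :: "('a \<Rightarrow> real) \<Rightarrow> 'a set" where
  "minimizers f = {z. \<forall>z'. f z \<le> f z'}"

end

theory Submission
  imports Defs
begin

declare transpose_matrix_vector[simp del] vector_transpose_matrix[simp del]

lemma inner_mv_transpose: "inner x ((A::real^'n^'m) *v y) = inner (transpose A *v x) y"
  by (simp add: dot_lmul_matrix transpose_matrix_vector)

lemma matrix_inv_props:
  fixes A :: "real^'n^'n"
  assumes "invertible A"
  shows "A ** matrix_inv A = mat 1" "matrix_inv A ** A = mat 1"
proof -
  have "\<exists>A'. A ** A' = mat 1 \<and> A' ** A = mat 1" using assms unfolding invertible_def by blast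
  hence "A ** matrix_inv A = mat 1 \<and> matrix_inv A ** A = mat 1"
    unfolding matrix_inv_def by (rule someI_ex)
  thus "A ** matrix_inv A = mat 1" "matrix_inv A ** A = mat 1" by auto
qed

lemma pd_invertible:
  fixes A :: "real^'n^'n"
  assumes "\<And>x. x \<noteq> 0 \<Longrightarrow> inner x (A *v x) > 0"
  shows "invertible A"
proof -
  have "inj ((*v) A)"
  proof (rule injI)
    fix x y assume "A *v x = A *v y"
    hence "A *v (x - y) = 0" by (simp add: matrix_vector_mult_diff_distrib)
    thus "x = y" using assms[of "x - y"] by (cases "x - y = 0") auto
  qed
  thus ?thesis using matrix_left_invertible_injective invertible_left_inverse by blast
qed

lemma pd_inv_pd:
  fixes A :: "real^'n^'n"
  assumes pd: "\<And>x. x \<noteq> 0 \<Longrightarrow> inner x (A *v x) > 0"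
  shows "\<And>y. y \<noteq> 0 \<Longrightarrow> inner y (matrix_inv A *v y) > 0"
proof -
  fix y :: "real^'n" assume y: "y \<noteq> 0"
  have inv: "invertible A" by (rule pd_invertible[OF pd])
  define z where "z = matrix_inv A *v y"
  have yz: "y = A *v z" unfolding z_def
    by (simp add: matrix_vector_mul_assoc matrix_inv_props(1)[OF inv])
  have "z \<noteq> 0" using y yz by auto
  hence "inner z (A *v z) > 0" by (rule pd)
  moreover have "inner y (matrix_inv A *v y) = inner (A *v z) z" using yz z_def by simp
  ultimately show "inner y (matrix_inv A *v y) > 0" by (metis inner_commute)
qed

lemma transpose_add: "transpose (A + B) = transpose A + transpose (B::real^'n^'m)"
  by (simp add: transpose_def vec_eq_iff)

theorem theorem1:
  fixes F :: "real^'n^'n" and H :: "real^'n^'m"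
    and Q :: "real^'n^'n" and R :: "real^'m^'m"
    and x_prev :: "real^'n" and P_prev :: "real^'n^'n"
  assumes "rank H = CARD('m)"
    and "sym_pos_def_mat Q" and "sym_pos_def_mat R"
    and "sym_pos_semidef_mat P_prev"
  defines "xh \<equiv> kf_pred_mean F x_prev"
    and "Ph \<equiv> kf_pred_cov F P_prev Q"
  shows "minimizers (\<lambda>z::real^'m. norm (z - H *v xh))
       = minimizers (\<lambda>z::real^'m. gauss_KL xh Ph (kf_upd_mean xh Ph H R z) (kf_upd_cov Ph H R))"
proof -
  have Qs: "transpose Q = Q" and Qp: "\<And>x. x \<noteq> 0 \<Longrightarrow> inner x (Q *v x) > 0"
    using assms(2) unfolding sym_pos_def_mat_def by auto
  have Rp: "\<And>x. x \<noteq> 0 \<Longrightarrow> inner x (R *v x) > 0"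
    using assms(3) unfolding sym_pos_def_mat_def by auto
  have Ps: "transpose P_prev = P_prev" and Pp: "\<And>x. inner x (P_prev *v x) \<ge> 0"
    using assms(4) unfolding sym_pos_semidef_mat_def by auto
  have Phs: "transpose Ph = Ph"
    unfolding Ph_def kf_pred_cov_def
    by (simp add: transpose_add Qs Ps matrix_transpose_mul matrix_mul_assoc)
  have Phv: "Ph *v x = F *v (P_prev *v (transpose F *v x)) + Q *v x" for x
    unfolding Ph_def kf_pred_cov_def
    by (simp add: matrix_vector_mult_add_rdistrib flip: matrix_vector_mul_assoc)
  have Php: "inner x (Ph *v x) > 0" if "x \<noteq> 0" for x
  proof -
    have "inner x (Ph *v x) = inner (transpose F *v x) (P_prev *v (transpose F *v x)) + inner x (Q *v x)"
      by (simp add: Phv inner_add_right inner_mv_transpose)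
    thus ?thesis using Pp[of "transpose F *v x"] Qp[OF that] by linarith
  qed
  have Phsym: "inner x (Ph *v y) = inner y (Ph *v x)" for x y
    by (metis Phs inner_mv_transpose inner_commute)
  have injHt: "inj ((*v) (transpose H))"
    using assms(1) full_rank_injective rank_transpose by metis
  define S where "S = H ** Ph ** transpose H + R"
  have Sv: "S *v v = H *v (Ph *v (transpose H *v v)) + R *v v" for v
    unfolding S_def by (simp add: matrix_vector_mult_add_rdistrib flip: matrix_vector_mul_assoc)
  have Sp: "inner v (S *v v) > 0" if "v \<noteq> 0" for v
  proof -
    have "inner v (S *v v) = inner (transpose H *v v) (Ph *v (transpose H *v v)) + inner v (R *v v)"
      by (simp add: Sv inner_add_right inner_mv_transpose)
    moreover have "inner (transpose H *v v) (Ph *v (transpose H *v v)) \<ge> 0"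
      using Php[of "transpose H *v v"] by (cases "transpose H *v v = 0") auto
    ultimately show ?thesis using Rp[OF that] by linarith
  qed
  have Sinv: "invertible S" by (rule pd_invertible[OF Sp])
  define Si where "Si = matrix_inv S"
  have SSi: "S *v (Si *v u) = u" for u
    unfolding Si_def by (simp add: matrix_vector_mul_assoc matrix_inv_props(1)[OF Sinv])
  define K where "K = kf_gain Ph H R"
  have Kv: "K *v r = Ph *v (transpose H *v (Si *v r))" for r
    unfolding K_def kf_gain_def Si_def S_def by (simp flip: matrix_vector_mul_assoc)
  have Kinj: "K *v r = 0 \<Longrightarrow> r = 0" for r
  proof -
    assume "K *v r = 0"
    hence "Ph *v (transpose H *v (Si *v r)) = 0" by (simp add: Kv)
    hence "transpose H *v (Si *v r) = 0" using Php by (metis inner_zero_right less_irrefl)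
    hence "Si *v r = 0" using injHt by (metis inj_eq matrix_vector_mult_0_right)
    thus "r = 0" using SSi[of r] by simp
  qed
  define Pt where "Pt = kf_upd_cov Ph H R"
  have Ptv: "Pt *v x = Ph *v x - K *v (H *v (Ph *v x))" for x
    unfolding Pt_def kf_upd_cov_def K_def
    by (simp add: matrix_vector_mult_diff_rdistrib flip: matrix_vector_mul_assoc)
  have Ptp: "inner x (Pt *v x) > 0" if x0: "x \<noteq> 0" for x
  proof -
    define u where "u = H *v (Ph *v x)"
    define v where "v = Si *v u"
    define w where "w = transpose H *v v"
    define a where "a = inner u v"
    have xPw: "inner x (Ph *v w) = a"
    proof -
      have "inner x (Ph *v w) = inner (transpose Ph *v x) w" by (rule inner_mv_transpose)
      also have "\<dots> = inner (Ph *v x) (transpose H *v v)" by (simp only: Phs w_def)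
      also have "\<dots> = inner (transpose (transpose H) *v (Ph *v x)) v" by (rule inner_mv_transpose)
      also have "\<dots> = a" by (simp only: transpose_transpose a_def u_def)
      finally show ?thesis .
    qed
    have xw: "inner x (K *v u) = a"
      using xPw by (simp only: Kv v_def[symmetric] w_def[symmetric])
    have wPw: "inner w (Ph *v w) = a - inner v (R *v v)"
    proof -
      have "inner w (Ph *v w) = inner (Ph *v w) w" by (rule inner_commute)
      also have "\<dots> = inner (Ph *v w) (transpose H *v v)" by (simp only: w_def)
      also have "\<dots> = inner (transpose (transpose H) *v (Ph *v w)) v" by (rule inner_mv_transpose)
      also have "\<dots> = inner v (H *v (Ph *v w))" by (simp only: transpose_transpose inner_commute)
      finally have "inner w (Ph *v w) = inner v (H *v (Ph *v (transpose H *v v)))" by (simp only: w_def)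
      also have "H *v (Ph *v (transpose H *v v)) = S *v v - R *v v" using Sv[of v] by simp
      also have "S *v v = u" unfolding v_def by (rule SSi)
      finally have "inner w (Ph *v w) = inner v u - inner v (R *v v)" by (simp only: inner_diff_right)
      thus ?thesis unfolding a_def by (metis inner_commute)
    qed
    have wx: "inner w (Ph *v x) = a" using xPw Phsym by metis
    have nn: "0 \<le> inner (x - w) (Ph *v (x - w))"
      using Php[of "x - w"] by (cases "x - w = 0") auto
    have ex: "inner (x - w) (Ph *v (x - w)) = inner x (Ph *v x) - inner x (Ph *v w) - inner w (Ph *v x) + inner w (Ph *v w)"
      by (simp add: matrix_vector_mult_diff_distrib inner_diff_left inner_diff_right)
    have A: "a + inner v (R *v v) \<le> inner x (Ph *v x)" using nn ex wx xPw wPw by linarith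
    have "a < inner x (Ph *v x)"
    proof (cases "v = 0")
      case True
      hence "a = 0" unfolding a_def by simp
      thus ?thesis using Php[OF x0] by simp
    next
      case False
      thus ?thesis using A Rp[OF False] by linarith
    qed
    moreover have "inner x (Pt *v x) = inner x (Ph *v x) - a"
      using xw unfolding Ptv inner_diff_right u_def by simp
    ultimately show ?thesis by simp
  qed
  define M where "M = matrix_inv Pt"
  have Mp: "y \<noteq> 0 \<Longrightarrow> inner y (M *v y) > 0" for y
    unfolding M_def by (rule pd_inv_pd[OF Ptp])
  define c where "c = ln (det Pt / det Ph) - real CARD('n) + trace (M ** Ph)"
  define q where "q = (\<lambda>r. inner (K *v r) (M *v (K *v r)))"
  have q0: "q 0 = 0" unfolding q_def by simp
  have qp: "r \<noteq> 0 \<Longrightarrow> q r > 0" for r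
    unfolding q_def using Mp Kinj by blast
  have KL: "gauss_KL xh Ph (kf_upd_mean xh Ph H R z) (kf_upd_cov Ph H R) = (c + q (z - H *v xh)) / 2" for z
    unfolding gauss_KL_def kf_upd_mean_def c_def q_def M_def Pt_def K_def by simp
  have gen: "minimizers (\<lambda>z. g (z - H *v xh)) = {H *v xh}"
    if "g 0 = 0" "\<And>r. r \<noteq> 0 \<Longrightarrow> g r > 0" for g :: "real^'m \<Rightarrow> real"
  proof -
    have "g (z - H *v xh) \<le> g (z' - H *v xh) \<longleftrightarrow> True" if "z = H *v xh" for z z'
      using that \<open>g 0 = 0\<close> \<open>\<And>r. r \<noteq> 0 \<Longrightarrow> g r > 0\<close>[of "z' - H *v xh"]
      by (cases "z' - H *v xh = 0") auto
    moreover have "\<not> g (z - H *v xh) \<le> g (H *v xh - H *v xh)" if "z \<noteq> H *v xh" for z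
      using that \<open>g 0 = 0\<close> \<open>\<And>r. r \<noteq> 0 \<Longrightarrow> g r > 0\<close>[of "z - H *v xh"] by auto
    ultimately show ?thesis unfolding minimizers_def
      by (auto, metis cancel_comm_monoid_add_class.diff_cancel)
  qed
  have L: "minimizers (\<lambda>z::real^'m. norm (z - H *v xh)) = {H *v xh}"
    using gen[of norm] by simp
  have "minimizers (\<lambda>z::real^'m. (c + q (z - H *v xh)) / 2)
        = minimizers (\<lambda>z. (\<lambda>r. (c + q r) / 2 - c / 2) (z - H *v xh))"
    unfolding minimizers_def by auto
  also have "\<dots> = {H *v xh}"
    by (rule gen) (auto simp: q0 qp)
  finally have R2: "minimizers (\<lambda>z::real^'m. (c + q (z - H *v xh)) / 2) = {H *v xh}" .
  have "(\<lambda>z::real^'m. gauss_KL xh Ph (kf_upd_mean xh Ph H R z) (kf_upd_cov Ph H R))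
      = (\<lambda>z. (c + q (z - H *v xh)) / 2)" using KL by (rule ext)
  thus ?thesis using L R2 by (simp only:)
qed

end
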